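(* Let $\mathbb{R}^n$ and $\mathbb{R}^m$ be equipped with arbitrary norms $\|\cdot\|$, with dual norms $\|\cdot\|_*$, and let $g:\mathbb{R}^n\to\mathbb{R}^m$, $y\in\mathbb{R}^m$, $\rho>0$, $L>0$, $\mu_0>0$. Let $B=\{x\in\mathbb{R}^n:\|x\|\le\rho\}$. Assume $g(0)=0$, $g$ is differentiable in $B$ with $\|g'(x^a)-g'(x^b)\|\le L\|x^a-x^b\|$ for all $x^a,x^b\in B$, and $\|g'(0)^T h\|_*\ge\mu_0\|h\|_*$ for all $h\in\mathbb{R}^m$. Let $r^*=\min\{\rho,\frac{\mu_0}{2L}\}$ and suppose $\|y\|\le(\mu_0-Lr^* )r^*$. Then there exists a solution $x^*$ of $g(x)=y$ with $\|x^*\|\le r^*$.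
   Context: For a vector $c$, the dual norm is $\|c\|_*=\sup_{\|x\|=1}(c,x)$. The norm of $g'(x)$ is the operator norm subordinate to the chosen vector norms. *)

theory Defs
  imports "HOL-Analysis.Analysis"
begin

definition is_norm :: "('a::real_vector \<Rightarrow> real) \<Rightarrow> bool" where
  "is_norm N \<longleftrightarrow> (\<forall>x. 0 \<le> N x) \<and> (\<forall>x. N x = 0 \<longleftrightarrow> x = 0)
     \<and> (\<forall>a x. N (a *\<^sub>R x) = \<bar>a\<bar> * N x) \<and> (\<forall>x y. N (x + y) \<le> N x + N y)"

definition dual_norm :: "('a::real_inner \<Rightarrow> real) \<Rightarrow> 'a \<Rightarrow> real" where
  "dual_norm N c = Sup {c \<bullet> x | x. N x = 1}"

definition op_norm :: "('a::real_vector \<Rightarrow> real) \<Rightarrow> ('b \<Rightarrow> real) \<Rightarrow> ('a \<Rightarrow> 'b) \<Rightarrow> real" where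
  "op_norm Nx Ny A = Sup {Ny (A x) | x. Nx x = 1}"

end

theory Submission
  imports Defs
begin


lemma isn_zero: "is_norm N \<Longrightarrow> N 0 = 0" by (simp add: is_norm_def)
lemma isn_nonneg: "is_norm N \<Longrightarrow> 0 \<le> N x" by (simp add: is_norm_def)
lemma isn_eq0: "is_norm N \<Longrightarrow> N x = 0 \<longleftrightarrow> x = 0" by (simp add: is_norm_def)
lemma isn_scale: "is_norm N \<Longrightarrow> N (a *\<^sub>R x) = \<bar>a\<bar> * N x" by (simp add: is_norm_def)
lemma isn_tri: "is_norm N \<Longrightarrow> N (x + y) \<le> N x + N y" by (simp add: is_norm_def)
lemma isn_minus: "is_norm N \<Longrightarrow> N (- x) = N x"
  using isn_scale[of N "-1" x] by simp
lemma isn_commute: "is_norm N \<Longrightarrow> N (x - y) = N (y - x)"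
  using isn_minus[of N "y - x"] by simp
lemma isn_diff: "is_norm N \<Longrightarrow> N x - N y \<le> N (x - y)"
  using isn_tri[of N "x - y" y] by simp
lemma isn_absdiff: "is_norm N \<Longrightarrow> \<bar>N x - N y\<bar> \<le> N (x - y)"
  using isn_diff[of N x y] isn_diff[of N y x] isn_commute[of N x y] by linarith

lemma isn_sum: assumes "is_norm N" "finite S" shows "N (\<Sum>i\<in>S. f i) \<le> (\<Sum>i\<in>S. N (f i))"
  using assms(2)
proof (induction S rule: finite_induct)
  case empty then show ?case by (simp add: isn_zero assms)
next
  case (insert x F)
  then show ?case using isn_tri[OF assms(1), of "f x" "sum f F"] by simp
qed

lemma isn_upper:
  fixes N :: "'a::euclidean_space \<Rightarrow> real"
  assumes "is_norm N" shows "\<exists>C>0. \<forall>x. N x \<le> C * norm x"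
proof -
  define C where "C = (\<Sum>b\<in>Basis. N b) + 1"
  have C0: "(\<Sum>b\<in>Basis. N b) \<ge> 0" by (intro sum_nonneg) (simp add: isn_nonneg assms)
  have "N x \<le> C * norm x" for x
  proof -
    have "N x = N (\<Sum>b\<in>Basis. (x \<bullet> b) *\<^sub>R b)" by (simp add: euclidean_representation)
    also have "\<dots> \<le> (\<Sum>b\<in>Basis. N ((x \<bullet> b) *\<^sub>R b))" by (rule isn_sum[OF assms]) simp
    also have "\<dots> = (\<Sum>b\<in>Basis. \<bar>x \<bullet> b\<bar> * N b)" by (simp add: isn_scale[OF assms])
    also have "\<dots> \<le> (\<Sum>b\<in>Basis. norm x * N b)"
      by (intro sum_mono mult_right_mono) (auto simp: Basis_le_norm isn_nonneg[OF assms])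
    also have "\<dots> = norm x * (\<Sum>b\<in>Basis. N b)" by (simp add: sum_distrib_left)
    also have "\<dots> \<le> C * norm x" unfolding C_def by (simp add: algebra_simps)
    finally show ?thesis .
  qed
  moreover have "C > 0" using C0 by (simp add: C_def)
  ultimately show ?thesis by blast
qed

lemma isn_cont:
  fixes N :: "'a::euclidean_space \<Rightarrow> real"
  assumes "is_norm N" shows "continuous_on S N"
proof -
  obtain C where C: "C > 0" "\<forall>x. N x \<le> C * norm x" using isn_upper[OF assms] by blast
  have "\<bar>N x - N y\<bar> \<le> C * dist x y" for x y
    using isn_absdiff[OF assms, of x y] C(2)[rule_format, of "x - y"] by (simp add: dist_norm)
  then have "C-lipschitz_on S N"
    by (intro lipschitz_onI) (auto simp: dist_real_def less_imp_le[OF C(1)])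
  then show ?thesis by (rule lipschitz_on_continuous_on)
qed

lemma isn_lower:
  fixes N :: "'a::euclidean_space \<Rightarrow> real"
  assumes "is_norm N" shows "\<exists>c>0. \<forall>x. c * norm x \<le> N x"
proof -
  obtain b :: 'a where b: "b \<in> Basis" using nonempty_Basis by blast
  have ne: "sphere 0 1 \<noteq> ({}::'a set)" using b by (intro notI) (auto dest: equals0D[of _ b] simp: norm_Basis)
  obtain x0 where x0: "x0 \<in> sphere (0::'a) 1" "\<forall>y\<in>sphere 0 1. N x0 \<le> N y"
    using continuous_attains_inf[OF compact_sphere ne isn_cont[OF assms]] by blast
  have c0: "N x0 > 0" using x0(1) isn_eq0[OF assms, of x0] isn_nonneg[OF assms, of x0] by auto
  have "N x0 * norm x \<le> N x" for x
  proof (cases "x = 0")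
    case True then show ?thesis by (simp add: isn_zero[OF assms])
  next
    case False
    have "N x0 \<le> N ((1 / norm x) *\<^sub>R x)" using x0(2) False by simp
    also have "\<dots> = N x / norm x" by (simp add: isn_scale[OF assms])
    finally show ?thesis using False by (simp add: field_simps)
  qed
  then show ?thesis using c0 by blast
qed



lemma isn_unit_exists:
  fixes N :: "'a::euclidean_space \<Rightarrow> real"
  assumes "is_norm N" shows "\<exists>u. N u = 1"
proof -
  obtain b :: 'a where b: "b \<in> Basis" using nonempty_Basis by blast
  then have "b \<noteq> 0" by auto
  then have "N b > 0" using isn_eq0[OF assms, of b] isn_nonneg[OF assms, of b] by auto
  then have "N ((1 / N b) *\<^sub>R b) = 1" by (simp add: isn_scale[OF assms])
  then show ?thesis by blast
qed

lemma dual_bdd: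
  fixes N :: "'a::euclidean_space \<Rightarrow> real"
  assumes "is_norm N" shows "bdd_above {c \<bullet> x | x. N x = 1}"
proof -
  obtain cl where cl: "cl > 0" "\<forall>x. cl * norm x \<le> N x" using isn_lower[OF assms] by blast
  have "c \<bullet> x \<le> norm c / cl" if "N x = 1" for x
  proof -
    have "norm x \<le> 1 / cl" using cl that by (simp add: field_simps) (metis mult.commute)
    then have "c \<bullet> x \<le> norm c * (1 / cl)"
      using norm_cauchy_schwarz[of c x] by (meson mult_left_mono norm_ge_zero order_trans)
    then show ?thesis by simp
  qed
  then show ?thesis by (auto intro!: bdd_aboveI)
qed

lemma dual_le:
  fixes N :: "'a::euclidean_space \<Rightarrow> real"
  assumes "is_norm N" shows "c \<bullet> x \<le> dual_norm N c * N x"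
proof (cases "x = 0")
  case True then show ?thesis by (simp add: isn_zero[OF assms])
next
  case False
  then have p: "N x > 0" using isn_eq0[OF assms, of x] isn_nonneg[OF assms, of x] by auto
  have "N ((1 / N x) *\<^sub>R x) = 1" using p by (simp add: isn_scale[OF assms])
  then have "c \<bullet> ((1 / N x) *\<^sub>R x) \<le> dual_norm N c"
    unfolding dual_norm_def by (intro cSup_upper[OF _ dual_bdd[OF assms]]) blast
  then show ?thesis using p by (simp add: field_simps)
qed

lemma dual_least:
  fixes N :: "'a::euclidean_space \<Rightarrow> real"
  assumes "is_norm N" "\<And>u. N u = 1 \<Longrightarrow> c \<bullet> u \<le> M" shows "dual_norm N c \<le> M"
  unfolding dual_norm_def using isn_unit_exists[OF assms(1)] assms(2)
  by (intro cSup_least) auto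

lemma op_le:
  fixes Nx :: "'a::euclidean_space \<Rightarrow> real" and Ny :: "'b::euclidean_space \<Rightarrow> real"
  assumes "is_norm Nx" "is_norm Ny" "linear A"
  shows "Ny (A v) \<le> op_norm Nx Ny A * Nx v"
proof -
  obtain cl where cl: "cl > 0" "\<forall>x. cl * norm x \<le> Nx x" using isn_lower[OF assms(1)] by blast
  obtain C where C: "C > 0" "\<forall>x. Ny x \<le> C * norm x" using isn_upper[OF assms(2)] by blast
  obtain K where K: "\<forall>x. norm (A x) \<le> K * norm x" using linear_bounded[OF assms(3)] by blast
  have K0: "\<bar>K\<bar> \<ge> 0" by simp
  have K': "\<forall>x. norm (A x) \<le> \<bar>K\<bar> * norm x" using K
    by (meson abs_ge_self mult_right_mono norm_ge_zero order_trans)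
  have bdd: "bdd_above {Ny (A x) | x. Nx x = 1}"
  proof (intro bdd_aboveI, clarify)
    fix x assume "Nx x = 1"
    then have "norm x \<le> 1 / cl" using cl by (simp add: field_simps) (metis mult.commute)
    have "Ny (A x) \<le> C * norm (A x)" using C by blast
    also have "\<dots> \<le> C * (\<bar>K\<bar> * norm x)" using K' C(1) by (simp add: mult_left_mono)
    also have "\<dots> \<le> C * (\<bar>K\<bar> * (1 / cl))"
      using \<open>norm x \<le> 1 / cl\<close> K0 C(1) by (intro mult_left_mono) auto
    finally show "Ny (A x) \<le> C * (\<bar>K\<bar> * (1 / cl))" .
  qed
  show ?thesis
  proof (cases "v = 0")
    case True then show ?thesis using linear_0[OF assms(3)] by (simp add: isn_zero[OF assms(2)] isn_zero[OF assms(1)])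
  next
    case False
    then have p: "Nx v > 0" using isn_eq0[OF assms(1), of v] isn_nonneg[OF assms(1), of v] by auto
    have "Nx ((1 / Nx v) *\<^sub>R v) = 1" using p by (simp add: isn_scale[OF assms(1)])
    then have "Ny (A ((1 / Nx v) *\<^sub>R v)) \<le> op_norm Nx Ny A"
      unfolding op_norm_def by (intro cSup_upper[OF _ bdd]) blast
    then have "Ny (A v) / Nx v \<le> op_norm Nx Ny A"
      using p by (simp add: linear_scale[OF assms(3)] isn_scale[OF assms(2)])
    then show ?thesis using p by (simp add: field_simps)
  qed
qed


lemma unit_in_closure:
  fixes N :: "'a::euclidean_space \<Rightarrow> real"
  assumes "is_norm N" "N u = 1" shows "u \<in> closure {z. N z < 1}"
proof (unfold closure_approachable, intro allI impI)
  fix e :: real assume e: "e > 0"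
  define t where "t = min (1/2) (e / (2 * (norm u + 1)))"
  have d: "0 < e / (2 * (norm u + 1))" using e
    by (intro divide_pos_pos) (auto intro: add_nonneg_pos)
  have t: "t > 0" "t \<le> 1/2" using d unfolding t_def by (simp, linarith)
  have "t * norm u < e"
  proof -
    have "t * norm u \<le> (e / (2 * (norm u + 1))) * norm u"
      by (intro mult_right_mono) (auto simp: t_def)
    also have "\<dots> = e * (norm u / (2 * (norm u + 1)))" by simp
    also have "\<dots> < e * 1"
    proof (intro mult_strict_left_mono e)
      have "0 < 2 * (norm u + 1)" by (auto intro: add_nonneg_pos)
      then show "norm u / (2 * (norm u + 1)) < 1" by (simp add: divide_less_eq)
    qed
    also have "\<dots> = e" by simp
    finally show ?thesis .
  qed
  moreover have "N ((1 - t) *\<^sub>R u) < 1" using t assms by (simp add: isn_scale[OF assms(1)])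
  moreover have "dist ((1 - t) *\<^sub>R u) u = t * norm u"
    using t by (simp add: dist_norm algebra_simps)
  ultimately show "\<exists>y\<in>{z. N z < 1}. dist y u < e" by (intro bexI[of _ "(1 - t) *\<^sub>R u"]) auto
qed
lemma convex_ball_N:
  assumes "is_norm N" shows "convex {z. N z < 1}"
proof (unfold convex_def, clarify)
  fix x y :: 'a and u v :: real
  assume h: "N x < 1" "N y < 1" "0 \<le> u" "0 \<le> v" "u + v = 1"
  have "N (u *\<^sub>R x + v *\<^sub>R y) \<le> u * N x + v * N y"
    using isn_tri[OF assms, of "u *\<^sub>R x" "v *\<^sub>R y"] h by (simp add: isn_scale[OF assms])
  also have "\<dots> < 1"
  proof (cases "u = 0")
    case True then show ?thesis using h by simp
  next
    case False
    then have "u * N x < u * 1" using h by simp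
    moreover have "v * N y \<le> v * 1" using h by (intro mult_left_mono) auto
    ultimately show ?thesis using h by linarith
  qed
  finally show "N (u *\<^sub>R x + v *\<^sub>R y) < 1" .
qed

lemma support_fun:
  fixes N :: "'a::euclidean_space \<Rightarrow> real"
  assumes N: "is_norm N" and "w \<noteq> 0" shows "\<exists>k. k \<bullet> w = N w \<and> (\<forall>z. k \<bullet> z \<le> N z)"
proof -
  define S where "S = {z. N z < 1}"
  have pw: "N w > 0" using assms isn_eq0[OF N, of w] isn_nonneg[OF N, of w] by auto
  define w0 where "w0 = (1 / N w) *\<^sub>R w"
  have w0: "N w0 = 1" using pw by (simp add: w0_def isn_scale[OF N])
  have "w0 \<notin> S" using w0 by (simp add: S_def)
  then have "w0 \<notin> rel_interior S" using rel_interior_subset[of S] by blast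
  moreover have "convex S" unfolding S_def by (rule convex_ball_N[OF N])
  moreover have "w0 \<in> closure S" unfolding S_def by (rule unit_in_closure[OF N w0])
  ultimately obtain a where a: "a \<noteq> 0" "\<And>y. y \<in> closure S \<Longrightarrow> a \<bullet> w0 \<le> a \<bullet> y"
    using supporting_hyperplane_relative_frontier[of S w0] by metis
  define h where "h = - a"
  have h: "\<And>y. y \<in> closure S \<Longrightarrow> h \<bullet> y \<le> h \<bullet> w0" using a(2) by (simp add: h_def)
  have "h \<noteq> 0" using a(1) by (simp add: h_def)
  then have ph: "N h > 0" using isn_eq0[OF N, of h] isn_nonneg[OF N, of h] by auto
  define y0 where "y0 = (1 / (2 * N h)) *\<^sub>R h"
  have "N y0 < 1" using ph by (simp add: y0_def isn_scale[OF N])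
  then have "y0 \<in> closure S" using closure_subset[of S] by (auto simp: S_def)
  moreover have "h \<bullet> y0 > 0" using ph \<open>h \<noteq> 0\<close> by (simp add: y0_def)
  ultimately have pb: "h \<bullet> w0 > 0" using h[of y0] by linarith
  define k where "k = (1 / (h \<bullet> w0)) *\<^sub>R h"
  have k1: "k \<bullet> y \<le> 1" if "y \<in> closure S" for y
  proof -
    have "h \<bullet> y / (h \<bullet> w0) \<le> 1" using h[OF that] pb by (simp add: divide_le_eq)
    then show ?thesis by (simp add: k_def)
  qed
  have "k \<bullet> z \<le> N z" for z
  proof (cases "z = 0")
    case True then show ?thesis by (simp add: isn_zero[OF N])
  next
    case False
    then have pz: "N z > 0" using isn_eq0[OF N, of z] isn_nonneg[OF N, of z] by auto
    have "N ((1 / N z) *\<^sub>R z) = 1" using pz by (simp add: isn_scale[OF N])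
    then have "k \<bullet> ((1 / N z) *\<^sub>R z) \<le> 1" unfolding S_def by (intro k1[unfolded S_def] unit_in_closure[OF N])
    then have "(k \<bullet> z) / N z \<le> 1" by simp
    then show ?thesis using pz by (simp add: divide_le_eq)
  qed
  moreover have "k \<bullet> w = N w"
  proof -
    have "k \<bullet> w0 = 1" using pb by (simp add: k_def)
    then have "(k \<bullet> w) / N w = 1" by (simp add: w0_def)
    then show ?thesis using pw by (simp add: divide_eq_eq)
  qed
  ultimately show ?thesis by blast
qed

lemma convex_cball_N:
  assumes "is_norm N" shows "convex {z. N z \<le> c}"
proof (unfold convex_def, clarify)
  fix x y :: 'a and u v :: real
  assume h: "N x \<le> c" "N y \<le> c" "0 \<le> u" "0 \<le> v" "u + v = 1"
  have "N (u *\<^sub>R x + v *\<^sub>R y) \<le> u * N x + v * N y"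
    using isn_tri[OF assms, of "u *\<^sub>R x" "v *\<^sub>R y"] h by (simp add: isn_scale[OF assms])
  also have "\<dots> \<le> u * c + v * c" using h by (intro add_mono mult_left_mono) auto
  also have "\<dots> = (u + v) * c" by (simp add: distrib_right)
  also have "\<dots> = c" using h(5) by simp
  finally show "N (u *\<^sub>R x + v *\<^sub>R y) \<le> c" .
qed

lemma compact_cball_N:
  fixes N :: "'a::euclidean_space \<Rightarrow> real"
  assumes "is_norm N" shows "compact {z. N z \<le> c}"
proof -
  obtain cl where cl: "cl > 0" "\<forall>x. cl * norm x \<le> N x" using isn_lower[OF assms] by blast
  have "closed {z. N z \<le> c}"
    by (rule closed_Collect_le[OF isn_cont[OF assms] continuous_on_const])
  moreover have "bounded {z. N z \<le> c}"
  proof (unfold bounded_iff, intro exI ballI)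
    fix x assume "x \<in> {z. N z \<le> c}"
    then have "N x \<le> c" by simp
    then have "cl * norm x \<le> c" using cl(2) by (meson order_trans)
    then show "norm x \<le> c / cl" using cl by (simp add: field_simps mult.commute)
  qed
  ultimately show ?thesis by (simp add: compact_eq_bounded_closed)
qed

lemma transp_inner:
  fixes A :: "real^'n \<Rightarrow> real^'m"
  assumes "linear A" shows "A u \<bullet> h = (transpose (matrix A) *v h) \<bullet> u"
proof -
  have "A u = matrix A *v u" using matrix_vector_mul(2)[OF assms] by metis
  then have "A u \<bullet> h = h \<bullet> (matrix A *v u)" by (simp add: inner_commute)
  also have "\<dots> = (h v* matrix A) \<bullet> u" by (simp add: dot_lmul_matrix)
  also have "h v* matrix A = transpose (matrix A) *v h"
    using vector_transpose_matrix[of h "transpose (matrix A)"] by simp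
  finally show ?thesis .
qed

lemma openness:
  fixes Nx :: "real^'n \<Rightarrow> real" and Ny :: "real^'m \<Rightarrow> real" and A :: "real^'n \<Rightarrow> real^'m"
  assumes Nx: "is_norm Nx" and Ny: "is_norm Ny" and lin: "linear A" and mu: "\<mu>0 > 0"
    and H: "\<forall>h. dual_norm Nx (transpose (matrix A) *v h) \<ge> \<mu>0 * dual_norm Ny h"
  shows "\<exists>v. A v = z \<and> \<mu>0 * Nx v \<le> Ny z"
proof (cases "z = 0")
  case True then show ?thesis using linear_0[OF lin] by (intro exI[of _ 0]) (simp add: isn_zero[OF Nx] isn_zero[OF Ny])
next
  case False
  then have pz: "Ny z > 0" using isn_eq0[OF Ny, of z] isn_nonneg[OF Ny, of z] by auto
  define K where "K = {u. Nx u \<le> 1}"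
  define S where "S = A ` K"
  have cS: "convex S" unfolding S_def K_def by (intro convex_linear_image lin convex_cball_N Nx)
  have kS: "compact S" unfolding S_def K_def
    by (intro compact_continuous_image compact_cball_N Nx linear_continuous_on)
      (use lin linear_conv_bounded_linear in blast)
  define w where "w = (\<mu>0 / Ny z) *\<^sub>R z"
  show ?thesis
  proof (cases "w \<in> S")
    case True
    then obtain u where u: "Nx u \<le> 1" "A u = w" by (auto simp: S_def K_def)
    define v where "v = (Ny z / \<mu>0) *\<^sub>R u"
    have "A v = z" using u mu pz by (simp add: v_def linear_scale[OF lin] w_def)
    moreover have "\<mu>0 * Nx v \<le> Ny z"
    proof -
      have "\<mu>0 * Nx v = Ny z * Nx u" using mu pz by (simp add: v_def isn_scale[OF Nx])
      also have "\<dots> \<le> Ny z" using u pz by (simp add: mult_left_le)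
      finally show ?thesis .
    qed
    ultimately show ?thesis by blast
  next
    case False
    obtain a b where ab: "a \<bullet> w < b" "\<forall>x\<in>S. b < a \<bullet> x"
      using separating_hyperplane_closed_point[OF cS compact_imp_closed[OF kS] False] by blast
    define h where "h = - a"
    have "dual_norm Nx (transpose (matrix A) *v h) \<le> - b"
    proof (rule dual_least[OF Nx])
      fix u assume "Nx u = 1"
      then have "A u \<in> S" by (auto simp: S_def K_def)
      then have "b < a \<bullet> A u" using ab by blast
      then have "h \<bullet> A u \<le> - b" by (simp add: h_def)
      then show "(transpose (matrix A) *v h) \<bullet> u \<le> - b"
        using transp_inner[OF lin, of u h] by (simp add: inner_commute)
    qed
    then have "\<mu>0 * dual_norm Ny h \<le> - b" using H by (meson order_trans)
    also have "- b < h \<bullet> w" using ab by (simp add: h_def)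
    also have "h \<bullet> w \<le> dual_norm Ny h * Ny w" by (rule dual_le[OF Ny])
    also have "Ny w = \<mu>0" using mu pz by (simp add: w_def isn_scale[OF Ny])
    finally show ?thesis by simp
  qed
qed

lemma mvt_N:
  fixes Nx :: "real^'n \<Rightarrow> real" and Ny :: "real^'m \<Rightarrow> real"
    and g :: "real^'n \<Rightarrow> real^'m" and g' :: "real^'n \<Rightarrow> real^'n \<Rightarrow> real^'m"
  assumes Nx: "is_norm Nx" and Ny: "is_norm Ny"
    and deriv: "\<forall>x\<in>{x. Nx x \<le> \<rho>}. (g has_derivative g' x) (at x within {x. Nx x \<le> \<rho>})"
    and bnd: "\<And>x v. Nx x \<le> r \<Longrightarrow> Ny (g' x v - g' 0 v) \<le> \<delta> * Nx v"
    and r: "r \<le> \<rho>" and d: "\<delta> \<ge> 0" and a: "Nx a \<le> r" and b: "Nx b \<le> r"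
  shows "Ny ((g b - g' 0 b) - (g a - g' 0 a)) \<le> \<delta> * Nx (b - a)"
proof (cases "(g b - g' 0 b) - (g a - g' 0 a) = 0")
  case True then show ?thesis using d by (simp add: isn_zero[OF Ny] isn_nonneg[OF Nx])
next
  case False
  define w where "w = (g b - g' 0 b) - (g a - g' 0 a)"
  obtain k where k: "k \<bullet> w = Ny w" "\<forall>z. k \<bullet> z \<le> Ny z"
    using support_fun[OF Ny False] unfolding w_def by blast
  define B where "B = {x. Nx x \<le> \<rho>}"
  define p where "p = (\<lambda>t::real. a + t *\<^sub>R (b - a))"
  have pr: "Nx (p t) \<le> r" if "t \<in> {0..1}" for t
  proof -
    have "(1 - t) *\<^sub>R a + t *\<^sub>R b \<in> {z. Nx z \<le> r}"
      using convex_cball_N[OF Nx, of r] a b that unfolding convex_def by auto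
    moreover have "p t = (1 - t) *\<^sub>R a + t *\<^sub>R b" by (simp add: p_def algebra_simps)
    ultimately show ?thesis by simp
  qed
  have pB: "p ` {0..1} \<subseteq> B"
  proof
    fix x assume "x \<in> p ` {0..1}"
    then obtain t where "t \<in> {0..1}" "x = p t" by blast
    then have "Nx x \<le> r" using pr by simp
    then show "x \<in> B" using r by (simp add: B_def)
  qed
  have "0 \<in> B" using \<open>r \<le> \<rho>\<close> a isn_nonneg[OF Nx, of a] by (simp add: B_def isn_zero[OF Nx])
  then have "(g has_derivative g' 0) (at 0 within B)" using deriv by (simp add: B_def)
  then have lin0: "linear (g' 0)" by (rule has_derivative_linear)
  have dG: "((\<lambda>x. g x - g' 0 x) has_derivative (\<lambda>v. g' x v - g' 0 v)) (at x within p ` {0..1})"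
    if "x \<in> p ` {0..1}" for x
  proof -
    have "(g has_derivative g' x) (at x within B)" using deriv that pB by (auto simp: B_def)
    then have "(g has_derivative g' x) (at x within p ` {0..1})" using pB by (rule has_derivative_subset)
    moreover have "(g' 0 has_derivative g' 0) (at x within p ` {0..1})"
      by (rule linear_imp_has_derivative[OF lin0])
    ultimately show ?thesis by (rule has_derivative_diff)
  qed
  define \<phi> where "\<phi> = (\<lambda>t. k \<bullet> (g (p t) - g' 0 (p t)))"
  have dphi: "(\<phi> has_derivative (\<lambda>s. k \<bullet> (g' (p t) (s *\<^sub>R (b - a)) - g' 0 (s *\<^sub>R (b - a))))) (at t within {0..1})"
    if "0 \<le> t" "t \<le> 1" for t
  proof -
    have dp: "(p has_derivative (\<lambda>s. s *\<^sub>R (b - a))) (at t within {0..1})"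
      unfolding p_def by (auto intro!: derivative_eq_intros)
    have "((\<lambda>x. g x - g' 0 x) \<circ> p has_derivative (\<lambda>v. g' (p t) v - g' 0 v) \<circ> (\<lambda>s. s *\<^sub>R (b - a))) (at t within {0..1})"
      by (rule diff_chain_within[OF dp dG]) (use that in auto)
    then have "((\<lambda>t. k \<bullet> ((\<lambda>x. g x - g' 0 x) \<circ> p) t) has_derivative (\<lambda>s. k \<bullet> ((\<lambda>v. g' (p t) v - g' 0 v) \<circ> (\<lambda>s. s *\<^sub>R (b - a))) s)) (at t within {0..1})"
      by (rule has_derivative_inner_right)
    then show ?thesis by (simp add: \<phi>_def o_def)
  qed
  obtain \<xi> where xi: "\<xi> \<in> {0..1}" "\<phi> 1 - \<phi> 0 = k \<bullet> (g' (p \<xi>) ((1 - 0) *\<^sub>R (b - a)) - g' 0 ((1 - 0) *\<^sub>R (b - a)))"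
    using mvt_very_simple[of 0 1 \<phi>, OF _ dphi] by auto
  have "\<phi> 1 - \<phi> 0 = k \<bullet> w" by (simp add: \<phi>_def p_def w_def inner_diff_right)
  then have "Ny w = k \<bullet> (g' (p \<xi>) (b - a) - g' 0 (b - a))" using xi k by simp
  also have "\<dots> \<le> Ny (g' (p \<xi>) (b - a) - g' 0 (b - a))" using k by blast
  also have "\<dots> \<le> \<delta> * Nx (b - a)" by (rule bnd[OF pr[OF xi(1)]])
  finally show ?thesis by (simp add: w_def)
qed

theorem corollary3:
  fixes Nx :: "real^'n \<Rightarrow> real" and Ny :: "real^'m \<Rightarrow> real"
    and g :: "real^'n \<Rightarrow> real^'m" and g' :: "real^'n \<Rightarrow> real^'n \<Rightarrow> real^'m"
    and y :: "real^'m" and \<rho> L \<mu>0 :: real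
  assumes "is_norm Nx" and "is_norm Ny"
    and "\<rho> > 0" and "L > 0" and "\<mu>0 > 0"
    and "g 0 = 0"
    and "\<forall>x\<in>{x. Nx x \<le> \<rho>}. (g has_derivative g' x) (at x within {x. Nx x \<le> \<rho>})"
    and "\<forall>xa\<in>{x. Nx x \<le> \<rho>}. \<forall>xb\<in>{x. Nx x \<le> \<rho>}.
           op_norm Nx Ny (\<lambda>v. g' xa v - g' xb v) \<le> L * Nx (xa - xb)"
    and "\<forall>h. dual_norm Nx (transpose (matrix (g' 0)) *v h) \<ge> \<mu>0 * dual_norm Ny h"
    and "Ny y \<le> (\<mu>0 - L * min \<rho> (\<mu>0 / (2 * L))) * min \<rho> (\<mu>0 / (2 * L))"
  shows "\<exists>x. g x = y \<and> Nx x \<le> min \<rho> (\<mu>0 / (2 * L))"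
proof -
  note Nx = assms(1) and Ny = assms(2) and rho = assms(3) and L = assms(4) and mu = assms(5)
    and g0 = assms(6) and deriv = assms(7) and lip = assms(8) and H = assms(9)
  define r where "r = min \<rho> (\<mu>0 / (2 * L))"
  have yb: "Ny y \<le> (\<mu>0 - L * r) * r" using assms(10) by (simp add: r_def)
  have r0: "r > 0" using rho L mu by (simp add: r_def)
  have rr: "r \<le> \<rho>" by (simp add: r_def)
  have Lr: "L * r \<le> \<mu>0 / 2"
  proof -
    have "L * r \<le> L * (\<mu>0 / (2 * L))" using L by (intro mult_left_mono) (auto simp: r_def)
    also have "\<dots> = \<mu>0 / 2" using L by simp
    finally show ?thesis .
  qed
  define q where "q = L * r / \<mu>0"
  have q0: "q > 0" using L r0 mu by (simp add: q_def)
  have q1: "q \<le> 1/2" using Lr mu by (simp add: q_def divide_le_eq)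
  have qmu: "q * \<mu>0 = L * r" using mu by (simp add: q_def)
  define B where "B = {x. Nx x \<le> \<rho>}"
  have "0 \<in> B" using rho by (simp add: B_def isn_zero[OF Nx])
  then have lin0: "linear (g' 0)" using deriv by (intro has_derivative_linear) (auto simp: B_def)
  have bnd: "Ny (g' x v - g' 0 v) \<le> (L * r) * Nx v" if "Nx x \<le> r" for x v
  proof -
    have xB: "x \<in> B" using that rr by (simp add: B_def)
    then have linx: "linear (g' x)" using deriv by (intro has_derivative_linear) (auto simp: B_def)
    have lin: "linear (\<lambda>v. g' x v - g' 0 v)" by (intro linear_compose_sub linx lin0)
    have "Ny (g' x v - g' 0 v) \<le> op_norm Nx Ny (\<lambda>v. g' x v - g' 0 v) * Nx v"
      by (rule op_le[OF Nx Ny lin])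
    also have "\<dots> \<le> (L * r) * Nx v"
    proof (intro mult_right_mono isn_nonneg[OF Nx])
      have "op_norm Nx Ny (\<lambda>v. g' x v - g' 0 v) \<le> L * Nx (x - 0)" using lip[rule_format, of x 0] xB \<open>0 \<in> B\<close> unfolding B_def by blast
      also have "\<dots> \<le> L * r" using that L by simp
      finally show "op_norm Nx Ny (\<lambda>v. g' x v - g' 0 v) \<le> L * r" .
    qed
    finally show ?thesis .
  qed
  have "\<forall>z. \<exists>v. g' 0 v = z \<and> \<mu>0 * Nx v \<le> Ny z"
    using openness[OF Nx Ny lin0 mu H] by blast
  then obtain P where P: "\<And>z. g' 0 (P z) = z" "\<And>z. \<mu>0 * Nx (P z) \<le> Ny z" by metis
  define M where "M = Ny y"
  have M0: "M \<ge> 0" by (simp add: M_def isn_nonneg[OF Ny])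
  define xs where "xs = rec_nat 0 (\<lambda>k xk. xk + P (y - g xk))"
  have xs0: "xs 0 = 0" by (simp add: xs_def)
  have xsS: "xs (Suc k) = xs k + P (y - g (xs k))" for k by (simp add: xs_def)
  have sumb: "(M / \<mu>0) * (\<Sum>i<k. q ^ i) \<le> r" for k
  proof -
    have "(\<Sum>i<k. q ^ i) = (1 - q ^ k) / (1 - q)" using q1 by (simp add: sum_gp_strict)
    also have "\<dots> \<le> 1 / (1 - q)" using q0 q1 by (intro divide_right_mono) auto
    finally have "(M / \<mu>0) * (\<Sum>i<k. q ^ i) \<le> (M / \<mu>0) * (1 / (1 - q))"
      using M0 mu by (intro mult_left_mono) auto
    also have "\<dots> = M / (\<mu>0 - L * r)" using mu q1 by (simp add: q_def field_simps)
    also have "\<dots> \<le> r" using yb Lr mu by (simp add: M_def divide_le_eq mult.commute)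
    finally show ?thesis .
  qed
  have inv: "Ny (y - g (xs k)) \<le> q ^ k * M \<and> Nx (xs k) \<le> (M / \<mu>0) * (\<Sum>i<k. q ^ i)" for k
  proof (induction k)
    case 0 then show ?case by (simp add: xs0 g0 M_def isn_zero[OF Nx])
  next
    case (Suc k)
    define v where "v = P (y - g (xs k))"
    have x1: "xs (Suc k) = xs k + v" by (simp add: xsS v_def)
    have vb: "Nx v \<le> q ^ k * M / \<mu>0"
    proof -
      have "\<mu>0 * Nx v \<le> q ^ k * M" using P(2)[of "y - g (xs k)"] Suc.IH by (simp add: v_def)
      then show ?thesis using mu by (simp add: field_simps mult.commute)
    qed
    have n1: "Nx (xs (Suc k)) \<le> (M / \<mu>0) * (\<Sum>i<Suc k. q ^ i)"
    proof -
      have "Nx (xs (Suc k)) \<le> Nx (xs k) + Nx v" unfolding x1 by (rule isn_tri[OF Nx])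
      also have "\<dots> \<le> (M / \<mu>0) * (\<Sum>i<k. q ^ i) + q ^ k * M / \<mu>0" using Suc.IH vb by linarith
      also have "\<dots> = (M / \<mu>0) * (\<Sum>i<Suc k. q ^ i)" by (simp add: algebra_simps)
      finally show ?thesis .
    qed
    have ra: "Nx (xs k) \<le> r" using Suc.IH sumb[of k] by linarith
    have rb: "Nx (xs (Suc k)) \<le> r" using n1 sumb[of "Suc k"] by linarith
    have "y - g (xs (Suc k)) = - ((g (xs (Suc k)) - g' 0 (xs (Suc k))) - (g (xs k) - g' 0 (xs k)))"
    proof -
      have "g' 0 (xs (Suc k)) = g' 0 (xs k) + g' 0 v" unfolding x1 by (simp add: linear_add[OF lin0])
      moreover have "g' 0 v = y - g (xs k)" by (simp add: v_def P(1))
      ultimately show ?thesis by (simp add: algebra_simps)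
    qed
    then have "Ny (y - g (xs (Suc k))) = Ny ((g (xs (Suc k)) - g' 0 (xs (Suc k))) - (g (xs k) - g' 0 (xs k)))"
      by (metis isn_minus[OF Ny])
    also have "\<dots> \<le> (L * r) * Nx (xs (Suc k) - xs k)"
      by (rule mvt_N[OF Nx Ny deriv bnd rr _ ra rb]) (use L r0 in auto)
    also have "\<dots> = (L * r) * Nx v" by (simp add: x1)
    also have "\<dots> \<le> (L * r) * (q ^ k * M / \<mu>0)" using vb L r0 by (intro mult_left_mono) auto
    also have "\<dots> = q ^ Suc k * M" using mu qmu[symmetric] by (simp add: field_simps)
    finally show ?case using n1 by blast
  qed
  have xr: "Nx (xs k) \<le> r" for k using inv[of k] sumb[of k] by linarith
  obtain clx where clx: "clx > 0" "\<forall>x. clx * norm x \<le> Nx x" using isn_lower[OF Nx] by blast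
  obtain cly where cly: "cly > 0" "\<forall>x. cly * norm x \<le> Ny x" using isn_lower[OF Ny] by blast
  define v where "v = (\<lambda>k. xs (Suc k) - xs k)"
  have vb: "norm (v k) \<le> q ^ k * (M / (\<mu>0 * clx))" for k
  proof -
    have "v k = P (y - g (xs k))" by (simp add: v_def xsS)
    then have "\<mu>0 * Nx (v k) \<le> q ^ k * M" using P(2)[of "y - g (xs k)"] inv[of k] by simp
    moreover have "clx * norm (v k) \<le> Nx (v k)" using clx by blast
    ultimately have "\<mu>0 * (clx * norm (v k)) \<le> q ^ k * M" using mu
      by (meson mult_left_mono less_imp_le order_trans)
    then show ?thesis using mu clx by (simp add: field_simps mult.commute)
  qed
  have sv: "summable v"
  proof (rule summable_comparison_test'[OF summable_mult2[OF summable_geometric[of q]]])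
    show "norm q < 1" using q0 q1 by simp
    show "norm (v n) \<le> q ^ n * (M / (\<mu>0 * clx))" for n by (rule vb)
  qed
  have xsum: "xs = (\<lambda>k. \<Sum>i<k. v i)"
    by (rule ext) (simp add: v_def sum_lessThan_telescope xs0)
  define X where "X = suminf v"
  have lim: "xs \<longlonglongrightarrow> X" unfolding xsum X_def by (rule summable_LIMSEQ[OF sv])
  have "(\<lambda>k. Nx (xs k)) \<longlonglongrightarrow> Nx X"
    by (rule continuous_on_tendsto_compose[OF isn_cont[OF Nx, of UNIV] lim]) auto
  then have XR: "Nx X \<le> r" using xr by (intro LIMSEQ_le_const2) auto
  have contg: "continuous_on B g"
    by (rule has_derivative_continuous_on) (use deriv in \<open>auto simp: B_def\<close>)
  have "(\<lambda>k. g (xs k)) \<longlonglongrightarrow> g X"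
    by (rule continuous_on_tendsto_compose[OF contg lim]) (use XR xr rr in \<open>auto simp: B_def intro!: always_eventually intro: order_trans\<close>)
  then have l1: "(\<lambda>k. y - g (xs k)) \<longlonglongrightarrow> y - g X" by (intro tendsto_intros)
  have l2: "(\<lambda>k. y - g (xs k)) \<longlonglongrightarrow> 0"
  proof (rule Lim_null_comparison)
    show "\<forall>\<^sub>F k in sequentially. norm (y - g (xs k)) \<le> q ^ k * (M / cly)"
    proof (intro always_eventually allI)
      fix k
      have "cly * norm (y - g (xs k)) \<le> q ^ k * M" using cly inv[of k] by (meson order_trans)
      then show "norm (y - g (xs k)) \<le> q ^ k * (M / cly)" using cly by (simp add: field_simps mult.commute)
    qed
    have "(\<lambda>k. q ^ k) \<longlonglongrightarrow> 0" by (rule LIMSEQ_power_zero) (use q0 q1 in auto)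
    then show "(\<lambda>k. q ^ k * (M / cly)) \<longlonglongrightarrow> 0" by (rule tendsto_mult_left_zero)
  qed
  have "y - g X = 0" using LIMSEQ_unique[OF l1 l2] .
  then show ?thesis using XR by (intro exI[of _ X]) (simp add: r_def)
qed

end
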